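(* Let $\mathcal X,\mathcal U$ be finite nonempty sets, $f:\mathcal X\times\mathcal U\to\mathcal X$ and $\ell,g:\mathcal X\to\mathbb R$. Let $V_{\mathrm A}^*(x)=\max_{\pi\in\Pi}\min_{\tau\in\mathbb N}g(\xi_x^\pi(\tau))$ and $\tilde\ell(x)=\min\{\ell(x),V_{\mathrm A}^*(x)\}$. Then for all $x\in\mathcal X$, $$\max_{\pi\in\Pi}\max_{\tau\in\mathbb N}\min\Big\{\tilde\ell(\xi_x^\pi(\tau)),\min_{\kappa\le\tau}g(\xi_x^\pi(\kappa))\Big\}=\max_{\mathbf u\in\mathbb U}\max_{\tau\in\mathbb N}\min\Big\{\tilde\ell(\xi_x^{\mathbf u}(\tau)),\min_{\kappa\le\tau}g(\xi_x^{\mathbf u}(\kappa))\Big\}.$$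
   Context: $\mathbb N=\{0,1,\dots\}$; $\Pi$ is the set of maps $\mathcal X\to\mathcal U$; $\mathbb U$ is the set of sequences $\mathbb N\to\mathcal U$. For $\pi\in\Pi$: $\xi_x^\pi(0)=x$, $\xi_x^\pi(t+1)=f(\xi_x^\pi(t),\pi(\xi_x^\pi(t)))$. For $\mathbf u\in\mathbb U$: $\xi_x^{\mathbf u}(0)=x$, $\xi_x^{\mathbf u}(t+1)=f(\xi_x^{\mathbf u}(t),\mathbf u(t))$. *)

theory Defs
  imports Main Complex_Main
begin

primrec traj_pol :: "('x \<Rightarrow> 'u \<Rightarrow> 'x) \<Rightarrow> ('x \<Rightarrow> 'u) \<Rightarrow> 'x \<Rightarrow> nat \<Rightarrow> 'x" where
  "traj_pol f p x 0 = x"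
| "traj_pol f p x (Suc t) = f (traj_pol f p x t) (p (traj_pol f p x t))"

primrec traj_seq :: "('x \<Rightarrow> 'u \<Rightarrow> 'x) \<Rightarrow> (nat \<Rightarrow> 'u) \<Rightarrow> 'x \<Rightarrow> nat \<Rightarrow> 'x" where
  "traj_seq f u x 0 = x"
| "traj_seq f u x (Suc t) = f (traj_seq f u x t) (u t)"

text \<open>V_A^*(x) = max over policies of min over times of g along the trajectory.
  All maxima/minima are over finite value sets (values lie in the finite range of g).\<close>
definition VA :: "('x::finite \<Rightarrow> 'u::finite \<Rightarrow> 'x) \<Rightarrow> ('x \<Rightarrow> real) \<Rightarrow> 'x \<Rightarrow> real" where
  "VA f g x = Max ((\<lambda>p. Min ((\<lambda>\<tau>. g (traj_pol f p x \<tau>)) ` UNIV)) ` (UNIV :: ('x \<Rightarrow> 'u) set))"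

definition ltilde :: "('x::finite \<Rightarrow> 'u::finite \<Rightarrow> 'x) \<Rightarrow> ('x \<Rightarrow> real) \<Rightarrow> ('x \<Rightarrow> real) \<Rightarrow> 'x \<Rightarrow> real" where
  "ltilde f l g x = min (l x) (VA f g x)"

end

theory Submission
  imports Defs
begin

lemma shortcut:
  assumes "i < j" "traj_seq f u x i = traj_seq f u x j"
  defines "u' \<equiv> (\<lambda>k. if k < i then u k else u (k + (j - i)))"
  shows "traj_seq f u' x k = (if k \<le> i then traj_seq f u x k else traj_seq f u x (k + (j - i)))"
proof (induction k)
  case 0 then show ?case by simp
next
  case (Suc k)
  show ?case
  proof (cases "Suc k \<le> i")
    case True then show ?thesis using Suc by (simp add: u'_def)
  next
    case False
    then have "k \<ge> i" by simp
    show ?thesis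
    proof (cases "k = i")
      case True
      then show ?thesis using Suc assms(1,2) by (simp add: u'_def)
    next
      case False
      then show ?thesis using Suc \<open>k \<ge> i\<close> assms(1) by (simp add: u'_def)
    qed
  qed
qed

lemma distinct_pol:
  assumes "inj_on (traj_seq f u x) {..\<tau>}"
  defines "p \<equiv> (\<lambda>y. u (inv_into {..<\<tau>} (traj_seq f u x) y))"
  shows "k \<le> \<tau> \<Longrightarrow> traj_pol f p x k = traj_seq f u x k"
proof (induction k)
  case 0 then show ?case by simp
next
  case (Suc k)
  have inj: "inj_on (traj_seq f u x) {..<\<tau>}" using assms(1) by (rule inj_on_subset) auto
  have "k < \<tau>" using Suc by simp
  then have "p (traj_seq f u x k) = u k" unfolding p_def using inv_into_f_f[OF inj] by simp
  then show ?case using Suc by simp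
qed

lemma key:
  "\<forall>u. \<exists>p \<tau>'. traj_pol f p x \<tau>' = traj_seq f u x \<tau> \<and>
     traj_pol f p x ` {..\<tau>'} \<subseteq> traj_seq f u x ` {..\<tau>}"
proof (induction \<tau> rule: less_induct)
  case (less \<tau>)
  show ?case
  proof
    fix u
    show "\<exists>p \<tau>'. traj_pol f p x \<tau>' = traj_seq f u x \<tau> \<and>
       traj_pol f p x ` {..\<tau>'} \<subseteq> traj_seq f u x ` {..\<tau>}"
    proof (cases "inj_on (traj_seq f u x) {..\<tau>}")
      case True
      define p where "p \<equiv> (\<lambda>y. u (inv_into {..<\<tau>} (traj_seq f u x) y))"
      have e: "\<And>k. k \<le> \<tau> \<Longrightarrow> traj_pol f p x k = traj_seq f u x k"
        unfolding p_def by (rule distinct_pol[OF True])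
      have "traj_pol f p x ` {..\<tau>} \<subseteq> traj_seq f u x ` {..\<tau>}"
      proof
        fix y assume "y \<in> traj_pol f p x ` {..\<tau>}"
        then obtain k where k: "k \<in> {..\<tau>}" "y = traj_pol f p x k" by (rule imageE)
        then have "y = traj_seq f u x k" using e by simp
        then show "y \<in> traj_seq f u x ` {..\<tau>}" using k(1) by (rule image_eqI)
      qed
      moreover have "traj_pol f p x \<tau> = traj_seq f u x \<tau>" using e by simp
      ultimately show ?thesis by blast
    next
      case False
      then obtain i j where ij: "i \<in> {..\<tau>}" "j \<in> {..\<tau>}" "traj_seq f u x i = traj_seq f u x j" "i \<noteq> j"
        unfolding inj_on_def by blast
      have "\<exists>a b. a < b \<and> b \<le> \<tau> \<and> traj_seq f u x a = traj_seq f u x b"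
      proof (cases "i < j")
        case True then show ?thesis using ij by auto
      next
        case False then have "j < i" using ij(4) by simp
        then show ?thesis using ij by (intro exI[of _ j] exI[of _ i]) simp
      qed
      then obtain a b where ab: "a < b" "b \<le> \<tau>" "traj_seq f u x a = traj_seq f u x b"
        by blast
      define u' where "u' \<equiv> (\<lambda>k. if k < a then u k else u (k + (b - a)))"
      have sc: "\<And>k. traj_seq f u' x k = (if k \<le> a then traj_seq f u x k else traj_seq f u x (k + (b - a)))"
        unfolding u'_def by (rule shortcut[OF ab(1) ab(3)])
      have lt: "\<tau> - (b - a) < \<tau>" using ab by simp
      obtain p \<tau>' where p: "traj_pol f p x \<tau>' = traj_seq f u' x (\<tau> - (b - a))"
        "traj_pol f p x ` {..\<tau>'} \<subseteq> traj_seq f u' x ` {..\<tau> - (b - a)}"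
        using less[OF lt] by blast
      have end1: "traj_seq f u' x (\<tau> - (b - a)) = traj_seq f u x \<tau>"
      proof (cases "\<tau> - (b - a) \<le> a")
        case True
        then have "\<tau> - (b - a) = a" "\<tau> = b" using ab by simp_all
        then show ?thesis using sc[of "\<tau> - (b - a)"] ab(3) by simp
      next
        case False
        then have "\<tau> - (b - a) + (b - a) = \<tau>" using ab by simp
        then show ?thesis using sc[of "\<tau> - (b - a)"] False by simp
      qed
      have sub: "traj_seq f u' x ` {..\<tau> - (b - a)} \<subseteq> traj_seq f u x ` {..\<tau>}"
      proof
        fix y assume "y \<in> traj_seq f u' x ` {..\<tau> - (b - a)}"
        then obtain k where k: "k \<in> {..\<tau> - (b - a)}" "y = traj_seq f u' x k" by (rule imageE)
        show "y \<in> traj_seq f u x ` {..\<tau>}"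
        proof (cases "k \<le> a")
          case True
          then have "y = traj_seq f u x k" using k(2) sc[of k] by simp
          moreover have "k \<in> {..\<tau>}" using True ab by simp
          ultimately show ?thesis by (rule image_eqI)
        next
          case False
          then have "y = traj_seq f u x (k + (b - a))" using k(2) sc[of k] by simp
          moreover have "k + (b - a) \<in> {..\<tau>}" using k(1) ab by auto
          ultimately show ?thesis by (rule image_eqI)
        qed
      qed
      have "traj_pol f p x ` {..\<tau>'} \<subseteq> traj_seq f u x ` {..\<tau>}" using p(2) sub by (rule subset_trans)
      moreover have "traj_pol f p x \<tau>' = traj_seq f u x \<tau>" using p(1) end1 by simp
      ultimately show ?thesis by blast
    qed
  qed
qed

lemma pol_seq: "traj_seq f (\<lambda>t. p (traj_pol f p x t)) x t = traj_pol f p x t"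
  by (induction t) auto

theorem mainTheorem6:
  fixes f :: "'x::finite \<Rightarrow> 'u::finite \<Rightarrow> 'x" and l g :: "'x \<Rightarrow> real" and x :: 'x
  shows "Max ((\<lambda>p. Max ((\<lambda>\<tau>. min (ltilde f l g (traj_pol f p x \<tau>))
                         (Min ((\<lambda>\<kappa>. g (traj_pol f p x \<kappa>)) ` {..\<tau>}))) ` UNIV))
              ` (UNIV :: ('x \<Rightarrow> 'u) set))
       = Max ((\<lambda>u. Max ((\<lambda>\<tau>. min (ltilde f l g (traj_seq f u x \<tau>))
                         (Min ((\<lambda>\<kappa>. g (traj_seq f u x \<kappa>)) ` {..\<tau>}))) ` UNIV))
              ` (UNIV :: (nat \<Rightarrow> 'u) set))"
    (is "Max (?A ` _) = Max (?B ` _)")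
proof -
  define V where "V = range (ltilde f l g) \<union> range g"
  have fV: "finite V" unfolding V_def by simp
  have termV: "min (ltilde f l g (tr \<tau>)) (Min ((\<lambda>\<kappa>. g (tr \<kappa>)) ` {..\<tau>})) \<in> V" for tr :: "nat \<Rightarrow> 'x" and \<tau>
  proof -
    have "Min ((\<lambda>\<kappa>. g (tr \<kappa>)) ` {..\<tau>}) \<in> (\<lambda>\<kappa>. g (tr \<kappa>)) ` {..\<tau>}"
      by (rule Min_in) auto
    then have "Min ((\<lambda>\<kappa>. g (tr \<kappa>)) ` {..\<tau>}) \<in> V" unfolding V_def by blast
    moreover have "ltilde f l g (tr \<tau>) \<in> V" unfolding V_def by auto
    ultimately show ?thesis by (simp add: min_def)
  qed
  have inner: "(\<lambda>\<tau>. min (ltilde f l g (tr \<tau>)) (Min ((\<lambda>\<kappa>. g (tr \<kappa>)) ` {..\<tau>}))) ` UNIV \<subseteq> V"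
    for tr :: "nat \<Rightarrow> 'x" using termV by auto
  have finI: "finite ((\<lambda>\<tau>. min (ltilde f l g (tr \<tau>)) (Min ((\<lambda>\<kappa>. g (tr \<kappa>)) ` {..\<tau>}))) ` UNIV)"
    for tr :: "nat \<Rightarrow> 'x" using inner fV finite_subset by blast
  have innerV: "Max ((\<lambda>\<tau>. min (ltilde f l g (tr \<tau>)) (Min ((\<lambda>\<kappa>. g (tr \<kappa>)) ` {..\<tau>}))) ` UNIV) \<in> V"
    for tr :: "nat \<Rightarrow> 'x"
    using Max_in[OF finI[of tr]] inner[of tr] by auto
  have finB: "finite (range ?B)"
  proof (rule finite_subset[OF _ fV])
    show "range ?B \<subseteq> V"
    proof
      fix z assume "z \<in> range ?B"
      then obtain u where "z = ?B u" by (rule rangeE)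
      then show "z \<in> V" using innerV[of "traj_seq f u x"] by simp
    qed
  qed
  have finA: "finite (range ?A)"
  proof (rule finite_subset[OF _ fV])
    show "range ?A \<subseteq> V"
    proof
      fix z assume "z \<in> range ?A"
      then obtain p where "z = ?A p" by (rule rangeE)
      then show "z \<in> V" using innerV[of "traj_pol f p x"] by simp
    qed
  qed
  have AB: "?A p = ?B (\<lambda>t. p (traj_pol f p x t))" for p
    by (simp add: pol_seq)
  have le1: "Max (range ?A) \<le> Max (range ?B)"
  proof (rule Max_mono[OF _ _ finB])
    show "range ?A \<subseteq> range ?B"
    proof
      fix z assume "z \<in> range ?A"
      then obtain p where "z = ?A p" by (rule rangeE)
      then have "z = ?B (\<lambda>t. p (traj_pol f p x t))" by (simp only: AB)
      then show "z \<in> range ?B" by blast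
    qed
  qed (simp only: image_is_empty UNIV_not_empty not_False_eq_True)
  have le2: "Max (range ?B) \<le> Max (range ?A)"
  proof (rule Max.boundedI[OF finB])
    show "range ?B \<noteq> {}" by (simp only: image_is_empty UNIV_not_empty not_False_eq_True)
    fix z assume "z \<in> range ?B"
    then obtain u where zu: "z = ?B u" by (rule rangeE)
    have "?B u \<le> Max (range ?A)"
    proof (rule Max.boundedI[OF finI])
      show "range (\<lambda>\<tau>. min (ltilde f l g (traj_seq f u x \<tau>))
                         (Min ((\<lambda>\<kappa>. g (traj_seq f u x \<kappa>)) ` {..\<tau>}))) \<noteq> {}" by (simp only: image_is_empty UNIV_not_empty not_False_eq_True)
      fix w assume "w \<in> range (\<lambda>\<tau>. min (ltilde f l g (traj_seq f u x \<tau>))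
                         (Min ((\<lambda>\<kappa>. g (traj_seq f u x \<kappa>)) ` {..\<tau>})))"
      then obtain \<tau> where w: "w = min (ltilde f l g (traj_seq f u x \<tau>))
                         (Min ((\<lambda>\<kappa>. g (traj_seq f u x \<kappa>)) ` {..\<tau>}))" by (rule rangeE)
      have ex: "\<exists>p \<tau>'. traj_pol f p x \<tau>' = traj_seq f u x \<tau> \<and>
         traj_pol f p x ` {..\<tau>'} \<subseteq> traj_seq f u x ` {..\<tau>}"
        by (rule spec[OF key])
      then obtain p \<tau>' where p: "traj_pol f p x \<tau>' = traj_seq f u x \<tau>"
        "traj_pol f p x ` {..\<tau>'} \<subseteq> traj_seq f u x ` {..\<tau>}"
        by (elim exE conjE)
      have mn: "Min ((\<lambda>\<kappa>. g (traj_seq f u x \<kappa>)) ` {..\<tau>}) \<le> Min ((\<lambda>\<kappa>. g (traj_pol f p x \<kappa>)) ` {..\<tau>'})"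
      proof (rule Min_antimono)
        show "(\<lambda>\<kappa>. g (traj_pol f p x \<kappa>)) ` {..\<tau>'} \<subseteq> (\<lambda>\<kappa>. g (traj_seq f u x \<kappa>)) ` {..\<tau>}"
        proof
          fix y assume "y \<in> (\<lambda>\<kappa>. g (traj_pol f p x \<kappa>)) ` {..\<tau>'}"
          then obtain k where k: "k \<in> {..\<tau>'}" "y = g (traj_pol f p x k)" by (rule imageE)
          have "traj_pol f p x k \<in> traj_seq f u x ` {..\<tau>}" by (rule subsetD[OF p(2) imageI[OF k(1)]])
          then obtain j where j: "j \<in> {..\<tau>}" "traj_pol f p x k = traj_seq f u x j" by (rule imageE)
          have "y = g (traj_seq f u x j)" using k(2) j(2) by simp
          then show "y \<in> (\<lambda>\<kappa>. g (traj_seq f u x \<kappa>)) ` {..\<tau>}" using j(1) by (rule image_eqI)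
        qed
        show "finite ((\<lambda>\<kappa>. g (traj_seq f u x \<kappa>)) ` {..\<tau>})" by (rule finite_imageI) (rule finite_atMost)
        show "(\<lambda>\<kappa>. g (traj_pol f p x \<kappa>)) ` {..\<tau>'} \<noteq> {}"
          using imageI[OF atMost_iff[THEN iffD2, OF order_refl[of \<tau>']], of "\<lambda>\<kappa>. g (traj_pol f p x \<kappa>)"] by (intro notI) simp
      qed
      have "min (ltilde f l g (traj_seq f u x \<tau>)) (Min ((\<lambda>\<kappa>. g (traj_seq f u x \<kappa>)) ` {..\<tau>}))
          \<le> min (ltilde f l g (traj_pol f p x \<tau>')) (Min ((\<lambda>\<kappa>. g (traj_pol f p x \<kappa>)) ` {..\<tau>'}))"
        by (rule min.mono) (simp only: p(1) order_refl, rule mn)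
      also have "\<dots> \<le> ?A p" by (rule Max_ge[OF finI]) (rule rangeI)
      also have "\<dots> \<le> Max (range ?A)" by (rule Max_ge[OF finA]) (rule rangeI)
      finally show "w \<le> Max (range ?A)" using w by simp
    qed
    then show "z \<le> Max (range ?A)" using zu by simp
  qed
  show ?thesis using le1 le2 by (rule antisym)
qed

end
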